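(* Let $R$ be a unital ring with involution and let $a,b\in R$ both be core invertible with $a\overset{\circledast}{\leq} b$. Then: (1) $ba^{\circledast}=ab^{\circledast}$ and $a^{\circledast}b=b^{\circledast}a$; (2) $b^{\circledast}ba^{\circledast}=a^{\circledast}bb^{\circledast}=a^{\circledast}ba^{\circledast}=a^{\circledast}$; (3) $b^{\circledast}aa^{\circledast}=a^{\circledast}ab^{\circledast}=b^{\circledast}ab^{\circledast}=a^{\circledast}$.
   Context: $R$ is a ring with identity and an involution $x\mapsto x^{*}$. An element $a\in R$ is core invertible if there exists $x\in R$ with $axa=a$, $xR=aR$ and $Rx=Ra^{*}$; such $x$ is unique, called the core inverse of $a$ and denoted $a^{\circledast}$. For $a$ core invertible and $b\in R$, $a\overset{\circledast}{\leq} b$ means $a^{\circledast}a=a^{\circledast}b$ and $aa^{\circledast}=ba^{\circledast}$. *)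

theory Defs
  imports Main
begin

class ring_invol = ring_1 +
  fixes invol :: "'a \<Rightarrow> 'a"
  assumes invol_add: "invol (x + y) = invol x + invol y"
      and invol_mult: "invol (x * y) = invol y * invol x"
      and invol_invol: "invol (invol x) = x"

context ring_invol
begin

definition right_ideal :: "'a \<Rightarrow> 'a set" where
  "right_ideal a = {a * r | r. True}"

definition left_ideal :: "'a \<Rightarrow> 'a set" where
  "left_ideal a = {r * a | r. True}"

definition is_core_inverse :: "'a \<Rightarrow> 'a \<Rightarrow> bool" where
  "is_core_inverse a x \<longleftrightarrow> a * x * a = a \<and> right_ideal x = right_ideal a
      \<and> left_ideal x = left_ideal (invol a)"

definition core_invertible :: "'a \<Rightarrow> bool" where
  "core_invertible a \<longleftrightarrow> (\<exists>x. is_core_inverse a x)"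

definition core_inv :: "'a \<Rightarrow> 'a" where
  "core_inv a = (THE x. is_core_inverse a x)"

definition core_le :: "'a \<Rightarrow> 'a \<Rightarrow> bool" where
  "core_le a b \<longleftrightarrow> core_invertible a \<and>
     core_inv a * a = core_inv a * b \<and> a * core_inv a = b * core_inv a"

end

end

theory Submission
  imports Defs
begin

context ring_invol
begin

lemma ci_facts:
  assumes "is_core_inverse a x"
  shows "a * x * a = a" "x = a * x * x" "invol (a * x) = a * x" "x * a * x = x"
        "x * a * a = a" "invol a * a * x = invol a" "\<exists>w. x = w * invol a"
        "\<exists>u. x = a * u"
proof -
  have axa: "a * x * a = a" and ri: "right_ideal x = right_ideal a"
    and li: "left_ideal x = left_ideal (invol a)"
    using assms unfolding is_core_inverse_def by auto
  have "x \<in> right_ideal x" unfolding right_ideal_def by (auto intro: exI[of _ 1])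
  then obtain u where u: "x = a * u" using ri unfolding right_ideal_def by auto
  have "a \<in> right_ideal a" unfolding right_ideal_def by (auto intro: exI[of _ 1])
  then obtain v where v: "a = x * v" using ri unfolding right_ideal_def by auto
  have "x \<in> left_ideal x" unfolding left_ideal_def by (auto intro: exI[of _ 1])
  then obtain w where w: "x = w * invol a" using li unfolding left_ideal_def by auto
  show "a * x * a = a" by fact
  show "\<exists>w. x = w * invol a" using w by blast
  show "\<exists>u. x = a * u" using u by blast
  have "a * x * x = a * x * (a * u)" using u by simp
  also have "\<dots> = (a * x * a) * u" by (simp add: mult.assoc)
  finally show x2: "x = a * x * x" using axa u by simp
  have ia: "invol a = invol a * invol x * invol a"
    using arg_cong[OF axa, of invol] by (simp add: invol_mult mult.assoc)
  have xx: "x = x * invol x * invol a"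
  proof -
    have "x = w * (invol a * invol x * invol a)" using w ia by simp
    also have "\<dots> = (w * invol a) * invol x * invol a" by (simp add: mult.assoc)
    finally show ?thesis using w by simp
  qed
  have herm: "invol (a * x) = a * x"
  proof -
    have "a * x = a * x * invol x * invol a" using xx by (metis mult.assoc)
    moreover have "invol (a * x * invol x * invol a) = a * x * invol x * invol a"
      by (simp add: invol_mult invol_invol mult.assoc)
    ultimately show ?thesis by simp
  qed
  thus "invol (a * x) = a * x" .
  have "x * a * x = x * invol (a * x)" using herm by (simp add: mult.assoc)
  also have "\<dots> = x * invol x * invol a" by (simp add: invol_mult mult.assoc)
  finally show xax: "x * a * x = x" using xx by simp
  have "x * a * a = x * a * (x * v)" using v by simp
  also have "\<dots> = (x * a * x) * v" by (simp add: mult.assoc)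
  finally show "x * a * a = a" using xax v by simp
  have "invol a = invol (a * x * a)" using axa by simp
  also have "\<dots> = invol a * invol (a * x)" by (simp add: invol_mult mult.assoc)
  finally show "invol a * a * x = invol a" using herm by (simp add: mult.assoc)
qed

lemma ci_unique:
  assumes x: "is_core_inverse a x" and y: "is_core_inverse a y"
  shows "x = y"
proof -
  note fx = ci_facts[OF x] and fy = ci_facts[OF y]
  have e1: "a * x * (a * y) = a * y" using fx(1) by (metis mult.assoc)
  have e2: "a * y * (a * x) = a * x" using fy(1) by (metis mult.assoc)
  have "a * y = invol (a * x * (a * y))" using e1 fy(3) by simp
  also have "\<dots> = a * y * (a * x)" using fx(3) fy(3) by (simp add: invol_mult)
  finally have axy: "a * x = a * y" using e2 by simp
  have "x - y = a * x * x - a * y * y" using fx(2) fy(2) by simp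
  also have "\<dots> = a * (x * x - y * y)" by (simp add: right_diff_distrib mult.assoc)
  also have "\<dots> = x * a * a * (x * x - y * y)" using fx(5) by simp
  also have "\<dots> = x * (a * (a * (x * x) - a * (y * y)))"
    by (simp add: mult.assoc right_diff_distrib)
  also have "\<dots> = x * (a * x - a * y)"
  proof -
    have p: "a * (x * x) = x" by (metis fx(2) mult.assoc)
    have q: "a * (y * y) = y" by (metis fy(2) mult.assoc)
    show ?thesis by (simp only: p q right_diff_distrib)
  qed
  also have "\<dots> = 0" using axy by simp
  finally show ?thesis by simp
qed

lemma core_inv_is:
  assumes "core_invertible a" shows "is_core_inverse a (core_inv a)"
proof -
  obtain x where x: "is_core_inverse a x" using assms unfolding core_invertible_def by blast
  hence "core_inv a = x" unfolding core_inv_def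
    using ci_unique x by (blast intro: the_equality)
  thus ?thesis using x by simp
qed

end

theorem theorem2p6:
  fixes a b :: "'a :: ring_invol"
  assumes "core_invertible a" and "core_invertible b" and "core_le a b"
  shows "(b * core_inv a = a * core_inv b \<and> core_inv a * b = core_inv b * a)
     \<and> (core_inv b * b * core_inv a = core_inv a \<and> core_inv a * b * core_inv b = core_inv a
         \<and> core_inv a * b * core_inv a = core_inv a)
     \<and> (core_inv b * a * core_inv a = core_inv a \<and> core_inv a * a * core_inv b = core_inv a
         \<and> core_inv b * a * core_inv b = core_inv a)"
proof -
  define x where "x = core_inv a"
  define y where "y = core_inv b"
  have fa: "is_core_inverse a x" using core_inv_is[OF assms(1)] x_def by simp
  have fb: "is_core_inverse b y" using core_inv_is[OF assms(2)] y_def by simp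
  note A = ci_facts[OF fa] and B = ci_facts[OF fb]
  have h1: "x * a = x * b" and h2: "a * x = b * x"
    using assms(3) unfolding core_le_def x_def by auto
  have aba: "a = b * x * b"
  proof -
    have "a = a * x * a" using A(1) by simp
    also have "\<dots> = b * x * (a)" using h2 by simp
    also have "\<dots> = b * (x * a)" by (simp add: mult.assoc)
    finally show ?thesis using h1 by (simp add: mult.assoc)
  qed
  obtain w where w: "x = w * invol a" using A(7) by blast
  have xbby: "x * b * y = x"
  proof -
    have ia: "invol a = invol b * invol x * invol b"
      using arg_cong[OF aba, of invol] by (simp add: invol_mult mult.assoc)
    have ib: "invol b = invol b * b * y" using B(6) by simp
    have e: "invol a * b * y = invol a"
    proof -
      have "invol a * b * y = invol b * invol x * (invol b * b * y)"
        by (subst ia) (simp add: mult.assoc)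
      also have "\<dots> = invol b * invol x * invol b" by (simp only: ib[symmetric])
      also have "\<dots> = invol a" by (simp only: ia[symmetric])
      finally show ?thesis .
    qed
    have "x * b * y = w * invol a * b * y" by (simp only: w)
    also have "\<dots> = w * (invol a * b * y)" by (simp add: mult.assoc)
    also have "\<dots> = w * invol a" by (simp only: e)
    also have "\<dots> = x" by (simp only: w)
    finally show ?thesis .
  qed
  obtain u where u: "x = a * u" using A(8) by blast
  have ybx: "y * b * x = x"
  proof -
    have "y * b * x = y * b * (a * u)" by (simp only: u)
    also have "\<dots> = y * b * (b * x * b * u)" by (simp only: aba)
    also have "\<dots> = (y * b * b) * (x * b * u)" by (simp add: mult.assoc)
    also have "\<dots> = b * (x * b * u)" by (simp only: B(5))
    also have "\<dots> = a * u" by (simp only: aba) (simp add: mult.assoc)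
    also have "\<dots> = x" by (simp only: u)
    finally show ?thesis .
  qed
  have c1: "b * x = a * y"
  proof -
    have "a * y = b * x * b * y" by (subst aba) (rule refl)
    also have "\<dots> = b * (x * b * y)" by (simp add: mult.assoc)
    also have "\<dots> = b * x" by (simp only: xbby)
    finally show ?thesis by simp
  qed
  have c2: "x * b = y * a"
  proof -
    have "y * a = y * (b * x * b)" by (subst aba) (rule refl)
    also have "\<dots> = (y * b * x) * b" by (simp add: mult.assoc)
    also have "\<dots> = x * b" by (simp only: ybx)
    finally show ?thesis by simp
  qed
  have xbx: "x * b * x = x" using h1 A(4) by simp
  have d1: "y * a * x = x" using c2[symmetric] h1[symmetric] A(4) by simp
  have d2: "x * a * y = x" using h1 xbby by simp
  have d3: "y * a * y = x" using c2[symmetric] xbby by simp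
  have "(b * x = a * y \<and> x * b = y * a)
     \<and> (y * b * x = x \<and> x * b * y = x \<and> x * b * x = x)
     \<and> (y * a * x = x \<and> x * a * y = x \<and> y * a * y = x)"
    using c1 c2 ybx xbby xbx d1 d2 d3 by blast
  thus ?thesis unfolding x_def y_def .
qed

end
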